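(* Let $n\ge 2$, let $\sigma_1,\dots,\sigma_n>0$ and let $\rho_1,\dots,\rho_{n-1}\in(-1,1)$. Let $g$ be the density of the Gaussian random vector in $\mathbb R^n$ with zero mean, variances $\mathrm{Var}(X_i)=\sigma_i^2$, and correlation coefficients $\rho(X_k,X_l)=\rho_k\rho_{k+1}\cdots\rho_{l-1}$ for $k<l$ (this is the unique Markov Gaussian vector with zero mean, variances $\sigma_i^2$ and adjacent correlations $\rho(X_i,X_{i+1})=\rho_i$). Let $X$ be any random vector in $\mathbb R^n$ with a density $f\in L^1(\mathbb R^n)$, finite second moments, $f\ln f\in L^1(\mathbb R^n)$, $\mathrm{Var}(X_i)=\sigma_i^2$ for $i=1,\dots,n$, and $\rho(X_i,X_{i+1})=\rho_i$ for $i=1,\dots,n-1$. Then \[ \mathrm{dent}(f)\le \mathrm{dent}(g), \] with equality if and only if $f$ is a translate of $g$, i.e. $f(x)=g(x-m)$ for some $m\in\mathbb R^n$.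
   Context: For a density $f$ on $\mathbb R^n$ with $f\ln f\in L^1(\mathbb R^n)$, the differential entropy is $\mathrm{dent}(f)=-\int_{\mathbb R^n}f(x)\ln f(x)\,dx$. $\rho(X_i,X_j)$ denotes the correlation coefficient of $X_i$ and $X_j$. A random vector $X=(X_1,\dots,X_n)$ is called Markov if for every $i=2,\dots,n-1$ the random vectors $(X_1,\dots,X_{i-1})$ and $(X_{i+1},\dots,X_n)$ are conditionally independent given $X_i$. *)

theory Defs
  imports "HOL-Analysis.Analysis" "Jordan_Normal_Form.Determinant" "Jordan_Normal_Form.Gauss_Jordan_Elimination"
begin

abbreviation Rn :: "nat \<Rightarrow> (nat \<Rightarrow> real) measure" where
  "Rn n \<equiv> PiM {..<n} (\<lambda>_. lborel)"

definition mean_d :: "nat \<Rightarrow> ((nat \<Rightarrow> real) \<Rightarrow> real) \<Rightarrow> nat \<Rightarrow> real" where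
  "mean_d n f i = (\<integral>x. x i * f x \<partial>Rn n)"

definition cov_d :: "nat \<Rightarrow> ((nat \<Rightarrow> real) \<Rightarrow> real) \<Rightarrow> nat \<Rightarrow> nat \<Rightarrow> real" where
  "cov_d n f i j = (\<integral>x. (x i - mean_d n f i) * (x j - mean_d n f j) * f x \<partial>Rn n)"

definition var_d :: "nat \<Rightarrow> ((nat \<Rightarrow> real) \<Rightarrow> real) \<Rightarrow> nat \<Rightarrow> real" where
  "var_d n f i = cov_d n f i i"

definition corr_d :: "nat \<Rightarrow> ((nat \<Rightarrow> real) \<Rightarrow> real) \<Rightarrow> nat \<Rightarrow> nat \<Rightarrow> real" where
  "corr_d n f i j = cov_d n f i j / sqrt (var_d n f i * var_d n f j)"

definition dent :: "nat \<Rightarrow> ((nat \<Rightarrow> real) \<Rightarrow> real) \<Rightarrow> real" where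
  "dent n f = - (\<integral>x. f x * ln (f x) \<partial>Rn n)"

definition markov_cov :: "nat \<Rightarrow> (nat \<Rightarrow> real) \<Rightarrow> (nat \<Rightarrow> real) \<Rightarrow> real mat" where
  "markov_cov n \<sigma> \<rho> = mat n n (\<lambda>(k, l). \<sigma> k * \<sigma> l * (\<Prod>j\<in>{min k l..<max k l}. \<rho> j))"

definition gauss_dens :: "nat \<Rightarrow> real mat \<Rightarrow> (nat \<Rightarrow> real) \<Rightarrow> real" where
  "gauss_dens n S x =
     exp (- (vec n x \<bullet> (the (mat_inverse S) *\<^sub>v vec n x)) / 2) / sqrt ((2 * pi) ^ n * det S)"

end

theory Submission
  imports Defs "HOL-Probability.Probability"
begin


definition aa :: "(nat\<Rightarrow>real) \<Rightarrow> (nat\<Rightarrow>real) \<Rightarrow> nat \<Rightarrow> real" where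
  "aa \<sigma> \<rho> j = \<rho> j * \<sigma> (Suc j) / \<sigma> j"
definition dd :: "(nat\<Rightarrow>real) \<Rightarrow> (nat\<Rightarrow>real) \<Rightarrow> nat \<Rightarrow> real" where
  "dd \<sigma> \<rho> i = (if i = 0 then (\<sigma> 0)\<^sup>2 else (\<sigma> i)\<^sup>2 * (1 - (\<rho> (i-1))\<^sup>2))"
definition lin :: "(nat\<Rightarrow>real) \<Rightarrow> (nat\<Rightarrow>real) \<Rightarrow> nat \<Rightarrow> (nat \<Rightarrow> real) \<Rightarrow> real" where
  "lin \<sigma> \<rho> i x = (if i = 0 then x 0 else x i - aa \<sigma> \<rho> (i-1) * x (i-1))"

definition Lf where "Lf \<sigma> \<rho> = (\<lambda>(i,j). if j = i then 1 else if Suc j = i then - aa \<sigma> \<rho> j else (0::real))"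
definition Uf where "Uf \<sigma> \<rho> = (\<lambda>(i,l). if i \<le> l then \<sigma> i * \<sigma> l * (\<Prod>k\<in>{i..<l}. \<rho> k) *
     (if i = 0 then 1 else 1 - (\<rho> (i-1))\<^sup>2) else (0::real))"
definition Df where "Df \<sigma> \<rho> = (\<lambda>(i,j). if i = j then dd \<sigma> \<rho> i else (0::real))"
definition Dif where "Dif \<sigma> \<rho> = (\<lambda>(i,j). if i = j then 1 / dd \<sigma> \<rho> i else (0::real))"

lemma mat_mult_entry:
  "i < n \<Longrightarrow> j < n \<Longrightarrow> (mat n n A * mat n n B) $$ (i,j) = (\<Sum>k\<in>{0..<n}. A (i,k) * B (k,j))"
  by (simp add: scalar_prod_def)

lemma sum_L:
  fixes c F :: "nat \<Rightarrow> real"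
  assumes "i < (n::nat)"
  shows "(\<Sum>k\<in>{0..<n}. (if k = i then 1 else if Suc k = i then c k else 0) * F k)
     = F i + (if i = 0 then 0 else c (i-1) * F (i-1))"
proof -
  have "(\<Sum>k\<in>{0..<n}. (if k = i then 1 else if Suc k = i then c k else 0) * F k)
      = (\<Sum>k\<in>{0..<n}. (if k = i then F k else 0) + (if k = i - 1 \<and> i \<noteq> 0 then c k * F k else 0))"
    by (rule sum.cong) auto
  also have "\<dots> = F i + (\<Sum>k\<in>{0..<n}. (if k = i - 1 \<and> i \<noteq> 0 then c k * F k else 0))"
    using assms by (simp add: sum.distrib)
  also have "(\<Sum>k\<in>{0..<n}. (if k = i - 1 \<and> i \<noteq> 0 then c k * F k else 0)) = (if i = 0 then 0 else c (i-1) * F (i-1))"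
    using assms by (cases "i = 0") auto
  finally show ?thesis .
qed

lemma sum_L':
  fixes c F :: "nat \<Rightarrow> real"
  assumes "i < (n::nat)"
  shows "(\<Sum>k\<in>{0..<n}. F k * (if k = i then 1 else if Suc k = i then c k else 0))
     = F i + (if i = 0 then 0 else c (i-1) * F (i-1))"
  using sum_L[OF assms, of c F] by (simp only: mult.commute)

lemma LS_entry:
  fixes \<sigma> \<rho> :: "nat \<Rightarrow> real"
  assumes sp: "\<And>i. i < n \<Longrightarrow> \<sigma> i > 0" and i: "i < n" and l: "l < n"
  shows "(mat n n (Lf \<sigma> \<rho>) * markov_cov n \<sigma> \<rho>) $$ (i,l) = Uf \<sigma> \<rho> (i,l)"
proof -
  define F where "F k = \<sigma> k * \<sigma> l * (\<Prod>j\<in>{min k l..<max k l}. \<rho> j)" for k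
  have "(mat n n (Lf \<sigma> \<rho>) * markov_cov n \<sigma> \<rho>) $$ (i,l) =
     (\<Sum>k\<in>{0..<n}. (if k = i then 1 else if Suc k = i then - aa \<sigma> \<rho> k else 0) * F k)"
    unfolding markov_cov_def using i l by (subst mat_mult_entry) (auto simp: Lf_def F_def)
  also have "\<dots> = F i + (if i = 0 then 0 else - aa \<sigma> \<rho> (i-1) * F (i-1))"
    by (rule sum_L[OF i])
  also have "\<dots> = Uf \<sigma> \<rho> (i,l)"
  proof (cases i)
    case 0
    then show ?thesis by (simp add: F_def Uf_def)
  next
    case (Suc p)
    have sp0: "\<sigma> p > 0" using sp i Suc by auto
    show ?thesis
    proof (cases "l \<le> p")
      case True
      have e1: "(\<Prod>j\<in>{l..<Suc p}. \<rho> j) = (\<Prod>j\<in>{l..<p}. \<rho> j) * \<rho> p"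
        using True by (simp add: prod.atLeastLessThan_Suc)
      show ?thesis using True Suc sp0
        by (simp add: F_def Uf_def aa_def e1 min_def max_def field_simps)
    next
      case False
      have e1: "(\<Prod>j\<in>{p..<l}. \<rho> j) = \<rho> p * (\<Prod>j\<in>{Suc p..<l}. \<rho> j)"
        using False by (simp add: prod.atLeast_Suc_lessThan)
      show ?thesis using False Suc sp0
        by (simp add: F_def Uf_def aa_def e1 min_def max_def field_simps power2_eq_square)
    qed
  qed
  finally show ?thesis .
qed

lemma UL_entry:
  fixes \<sigma> \<rho> :: "nat \<Rightarrow> real"
  assumes sp: "\<And>i. i < n \<Longrightarrow> \<sigma> i > 0" and i: "i < n" and j: "j < n"
  shows "(mat n n (Uf \<sigma> \<rho>) * mat n n (\<lambda>(i,j). Lf \<sigma> \<rho> (j,i))) $$ (i,j) = Df \<sigma> \<rho> (i,j)"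
proof -
  define F where "F k = Uf \<sigma> \<rho> (i,k)" for k
  have "(mat n n (Uf \<sigma> \<rho>) * mat n n (\<lambda>(i,j). Lf \<sigma> \<rho> (j,i))) $$ (i,j) =
     (\<Sum>k\<in>{0..<n}. F k * (if k = j then 1 else if Suc k = j then - aa \<sigma> \<rho> k else 0))"
    using i j by (subst mat_mult_entry) (auto simp: Lf_def F_def)
  also have "\<dots> = F j + (if j = 0 then 0 else - aa \<sigma> \<rho> (j-1) * F (j-1))"
    by (rule sum_L'[OF j])
  also have "\<dots> = Df \<sigma> \<rho> (i,j)"
  proof (cases j)
    case 0
    then show ?thesis by (simp add: F_def Uf_def Df_def dd_def power2_eq_square)
  next
    case (Suc q)
    have sp0: "\<sigma> q > 0" using sp j Suc by auto
    consider "i > j" | "i = j" | "i \<le> q" using Suc by linarith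
    then show ?thesis
    proof cases
      case 1
      then show ?thesis using Suc by (simp add: F_def Uf_def Df_def)
    next
      case 2
      then show ?thesis using Suc by (simp add: F_def Uf_def Df_def dd_def power2_eq_square)
    next
      case 3
      have e1: "(\<Prod>k\<in>{i..<Suc q}. \<rho> k) = (\<Prod>k\<in>{i..<q}. \<rho> k) * \<rho> q"
        using 3 by (simp add: prod.atLeastLessThan_Suc)
      show ?thesis using 3 Suc sp0
        by (simp add: F_def Uf_def Df_def aa_def e1 field_simps)
    qed
  qed
  finally show ?thesis .
qed

lemma DDi_entry:
  fixes \<sigma> \<rho> :: "nat \<Rightarrow> real"
  assumes dp: "\<And>i. i < n \<Longrightarrow> dd \<sigma> \<rho> i \<noteq> 0" and i: "i < n" and j: "j < n"
  shows "(mat n n (Df \<sigma> \<rho>) * mat n n (Dif \<sigma> \<rho>)) $$ (i,j) = (if i = j then 1 else 0)"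
proof -
  have "(mat n n (Df \<sigma> \<rho>) * mat n n (Dif \<sigma> \<rho>)) $$ (i,j) =
     (\<Sum>k\<in>{0..<n}. (if i = k then dd \<sigma> \<rho> i else 0) * Dif \<sigma> \<rho> (k, j))"
    using i j by (subst mat_mult_entry) (auto simp: Df_def intro!: sum.cong)
  also have "\<dots> = (\<Sum>k\<in>{0..<n}. (if i = k then dd \<sigma> \<rho> i * Dif \<sigma> \<rho> (k, j) else 0))"
    by (rule sum.cong) auto
  also have "\<dots> = dd \<sigma> \<rho> i * Dif \<sigma> \<rho> (i, j)" using i by simp
  also have "\<dots> = (if i = j then 1 else 0)" using dp[OF i] by (auto simp: Dif_def)
  finally show ?thesis .
qed

lemma prod_diag: "prod_list (diag_mat (mat n n f)) = (\<Prod>i\<in>{0..<n}. f (i,i))"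
proof -
  have "prod_list (diag_mat (mat n n f)) = prod_list (map (\<lambda>i. f (i,i)) [0..<n])"
    unfolding diag_mat_def by (intro arg_cong[where f=prod_list] map_cong) auto
  also have "\<dots> = (\<Prod>i\<in>{0..<n}. f (i,i))"
    by (subst prod.distinct_set_conv_list[symmetric]) auto
  finally show ?thesis .
qed

lemma dd_pos:
  fixes \<sigma> \<rho> :: "nat \<Rightarrow> real"
  assumes sp: "\<And>i. i < n \<Longrightarrow> \<sigma> i > 0" and rb: "\<And>i. i < n - 1 \<Longrightarrow> \<rho> i \<in> {-1<..<1}"
    and i: "i < n"
  shows "dd \<sigma> \<rho> i > 0"
proof (cases i)
  case 0 then show ?thesis using sp[OF i] by (simp add: dd_def)
next
  case (Suc p)
  have "\<rho> p \<in> {-1<..<1}" using rb i Suc by auto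
  then have "(\<rho> p)\<^sup>2 < 1" by (simp add: abs_square_less_1 abs_less_iff)
  then show ?thesis using sp[OF i] Suc by (simp add: dd_def)
qed

lemma markov_facts:
  fixes \<sigma> \<rho> :: "nat \<Rightarrow> real"
  assumes sp: "\<And>i. i < n \<Longrightarrow> \<sigma> i > 0" and rb: "\<And>i. i < n - 1 \<Longrightarrow> \<rho> i \<in> {-1<..<1}"
  shows "det (markov_cov n \<sigma> \<rho>) = (\<Prod>i\<in>{0..<n}. dd \<sigma> \<rho> i)"
    and "vec n x \<bullet> (the (mat_inverse (markov_cov n \<sigma> \<rho>)) *\<^sub>v vec n x)
           = (\<Sum>i\<in>{0..<n}. (lin \<sigma> \<rho> i x)\<^sup>2 / dd \<sigma> \<rho> i)"
proof -
  define S where "S = markov_cov n \<sigma> \<rho>"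
  define L where "L = mat n n (Lf \<sigma> \<rho>)"
  define LT where "LT = mat n n (\<lambda>(i,j). Lf \<sigma> \<rho> (j,i))"
  define U where "U = mat n n (Uf \<sigma> \<rho>)"
  define D where "D = mat n n (Df \<sigma> \<rho>)"
  define Di where "Di = mat n n (Dif \<sigma> \<rho>)"
  have dp: "\<And>i. i < n \<Longrightarrow> dd \<sigma> \<rho> i \<noteq> 0" using dd_pos[OF sp rb] by force
  have cS: "S \<in> carrier_mat n n" by (simp add: S_def markov_cov_def)
  have cL: "L \<in> carrier_mat n n" "LT \<in> carrier_mat n n" "U \<in> carrier_mat n n"
    "D \<in> carrier_mat n n" "Di \<in> carrier_mat n n" by (auto simp: L_def LT_def U_def D_def Di_def)
  have LT_eq: "transpose_mat L = LT" by (rule eq_matI) (auto simp: L_def LT_def)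
  have LS: "L * S = U"
  proof (rule eq_matI)
    fix i j assume "i < dim_row U" "j < dim_col U"
    then show "(L * S) $$ (i,j) = U $$ (i,j)"
      using LS_entry[OF sp, where i=i and l=j] by (simp add: L_def S_def U_def)
  qed (auto simp: L_def S_def U_def markov_cov_def)
  have ULT: "U * LT = D"
  proof (rule eq_matI)
    fix i j assume "i < dim_row D" "j < dim_col D"
    then show "(U * LT) $$ (i,j) = D $$ (i,j)"
      using UL_entry[OF sp, where i=i and j=j] by (simp add: LT_def U_def D_def)
  qed (auto simp: LT_def U_def D_def)
  have DDi: "D * Di = 1\<^sub>m n"
  proof (rule eq_matI)
    fix i j assume "i < dim_row (1\<^sub>m n :: real mat)" "j < dim_col (1\<^sub>m n :: real mat)"
    then show "(D * Di) $$ (i,j) = (1\<^sub>m n :: real mat) $$ (i,j)"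
      using DDi_entry[OF dp, where i=i and j=j] by (simp add: D_def Di_def)
  qed (auto simp: D_def Di_def)
  have "L * (S * (LT * Di)) = ((L * S) * LT) * Di"
    using cS cL by (simp add: assoc_mult_mat[of _ n n _ n _ n])
  also have "\<dots> = 1\<^sub>m n" using LS ULT DDi by simp
  finally have LSi: "L * (S * (LT * Di)) = 1\<^sub>m n" .
  have "S * (LT * Di) \<in> carrier_mat n n" using cS cL by (auto intro!: mult_carrier_mat)
  then have "(S * (LT * Di)) * L = 1\<^sub>m n"
    by (rule mat_mult_left_right_inverse[OF cL(1) _ LSi])
  then have SP: "S * ((LT * Di) * L) = 1\<^sub>m n"
    using cS cL by (simp add: assoc_mult_mat[of _ n n _ n _ n])
  have detLT: "det LT = 1"
  proof -
    have "upper_triangular LT" by (auto simp: upper_triangular_def LT_def Lf_def)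
    then have "det LT = prod_list (diag_mat LT)" by (rule det_upper_triangular[OF _ cL(2)])
    also have "\<dots> = 1" unfolding LT_def prod_diag by (simp add: Lf_def)
    finally show ?thesis .
  qed
  have detL: "det L = 1" using det_transpose[OF cL(1)] LT_eq detLT by simp
  have detD: "det D = (\<Prod>i\<in>{0..<n}. dd \<sigma> \<rho> i)"
  proof -
    have "upper_triangular D" by (auto simp: upper_triangular_def D_def Df_def)
    then have "det D = prod_list (diag_mat D)" by (rule det_upper_triangular[OF _ cL(4)])
    also have "\<dots> = (\<Prod>i\<in>{0..<n}. dd \<sigma> \<rho> i)" unfolding D_def prod_diag by (simp add: Df_def)
    finally show ?thesis .
  qed
  have "det D = det ((L * S) * LT)" using LS ULT by simp
  also have "\<dots> = det S"
    using cS cL by (simp add: det_mult[of _ n] detL detLT)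
  finally show detS: "det (markov_cov n \<sigma> \<rho>) = (\<Prod>i\<in>{0..<n}. dd \<sigma> \<rho> i)"
    using detD S_def by simp
  have "det S \<noteq> 0" using detS dp S_def by simp
  then have unit: "S \<in> Units (ring_mat TYPE(real) n undefined)"
    by (rule det_non_zero_imp_unit[OF cS])
  obtain B where B: "mat_inverse S = Some B"
    by (metis mat_inverse(1)[OF cS] unit not_None_eq)
  have BB: "S * B = 1\<^sub>m n" "B * S = 1\<^sub>m n" "B \<in> carrier_mat n n"
    using mat_inverse(2)[OF cS B] by auto
  have "B = B * (S * ((LT * Di) * L))" using SP BB by simp
  also have "\<dots> = (B * S) * ((LT * Di) * L)"
    by (rule assoc_mult_mat[OF BB(3) cS, symmetric]) (use cL in \<open>auto intro!: mult_carrier_mat\<close>)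
  also have "\<dots> = (LT * Di) * L" using BB cL by simp
  finally have Beq: "B = (LT * Di) * L" .
  define w where "w = L *\<^sub>v vec n x"
  have cw: "w \<in> carrier_vec n" using cL by (simp add: w_def)
  have wi: "w $ i = lin \<sigma> \<rho> i x" if "i < n" for i
  proof -
    have "w $ i = (\<Sum>k\<in>{0..<n}. (if k = i then 1 else if Suc k = i then - aa \<sigma> \<rho> k else 0) * x k)"
      using that by (auto simp: w_def L_def scalar_prod_def Lf_def intro!: sum.cong)
    also have "\<dots> = lin \<sigma> \<rho> i x" by (subst sum_L[OF that]) (simp add: lin_def)
    finally show ?thesis .
  qed
  have "vec n x \<bullet> (B *\<^sub>v vec n x) = vec n x \<bullet> (LT *\<^sub>v (Di *\<^sub>v w))"
  proof -
    have c1: "Di * L \<in> carrier_mat n n" using cL by auto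
    show ?thesis unfolding Beq w_def
      using assoc_mult_mat_vec[OF cL(2) c1 vec_carrier[of n x]]
        assoc_mult_mat_vec[OF cL(5) cL(1) vec_carrier[of n x]] cL by simp
  qed
  also have "\<dots> = (transpose_mat L *\<^sub>v (Di *\<^sub>v w)) \<bullet> vec n x"
    using cL cw LT_eq by (subst comm_scalar_prod[of _ n]) auto
  also have "\<dots> = (Di *\<^sub>v w) \<bullet> w"
    unfolding w_def by (rule transpose_vec_mult_scalar[OF cL(1)]) (use cL cw w_def in auto)
  also have "\<dots> = (\<Sum>i\<in>{0..<n}. (lin \<sigma> \<rho> i x)\<^sup>2 / dd \<sigma> \<rho> i)"
  proof -
    have "(Di *\<^sub>v w) $ i = w $ i / dd \<sigma> \<rho> i" if "i < n" for i
    proof -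
      have "(Di *\<^sub>v w) $ i = (\<Sum>k\<in>{0..<n}. (if i = k then 1 / dd \<sigma> \<rho> i else 0) * w $ k)"
        using that cw by (auto simp: Di_def scalar_prod_def Dif_def)
      also have "\<dots> = (\<Sum>k\<in>{0..<n}. (if i = k then w $ k / dd \<sigma> \<rho> i else 0))"
        by (rule sum.cong) auto
      also have "\<dots> = w $ i / dd \<sigma> \<rho> i" using that by simp
      finally show ?thesis .
    qed
    then show ?thesis using cw
      by (auto simp: scalar_prod_def wi power2_eq_square intro!: sum.cong)
  qed
  finally show "vec n x \<bullet> (the (mat_inverse (markov_cov n \<sigma> \<rho>)) *\<^sub>v vec n x)
           = (\<Sum>i\<in>{0..<n}. (lin \<sigma> \<rho> i x)\<^sup>2 / dd \<sigma> \<rho> i)"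
    using B S_def by simp
qed



definition chain :: "(nat\<Rightarrow>real) \<Rightarrow> (nat\<Rightarrow>real) \<Rightarrow> nat \<Rightarrow> (nat\<Rightarrow>real) \<Rightarrow> (nat\<Rightarrow>real) \<Rightarrow> real" where
  "chain \<sigma> \<rho> k m x = (\<Prod>i\<in>{0..<k}. normal_density 0 (sqrt (dd \<sigma> \<rho> i)) (lin \<sigma> \<rho> i (\<lambda>j. x j - m j)))"

lemma sqrt_prod: "sqrt (prod f A) = (\<Prod>i\<in>A. sqrt (f i :: real))"
  by (induction A rule: infinite_finite_induct) (auto simp: real_sqrt_mult)

lemma gauss_chain:
  fixes \<sigma> \<rho> :: "nat \<Rightarrow> real"
  assumes sp: "\<And>i. i < n \<Longrightarrow> \<sigma> i > 0" and rb: "\<And>i. i < n - 1 \<Longrightarrow> \<rho> i \<in> {-1<..<1}"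
  shows "gauss_dens n (markov_cov n \<sigma> \<rho>) x = chain \<sigma> \<rho> n (\<lambda>_. 0) x"
proof -
  have dp: "\<And>i. i \<in> {0..<n} \<Longrightarrow> dd \<sigma> \<rho> i > 0" using dd_pos[OF sp rb] by auto
  have "chain \<sigma> \<rho> n (\<lambda>_. 0) x = (\<Prod>i\<in>{0..<n}. (1 / sqrt (2 * pi * dd \<sigma> \<rho> i)) * exp (- ((lin \<sigma> \<rho> i x)\<^sup>2 / dd \<sigma> \<rho> i) / 2))"
  proof -
    have "\<And>i. i \<in> {0..<n} \<Longrightarrow> (sqrt (dd \<sigma> \<rho> i))\<^sup>2 = dd \<sigma> \<rho> i"
      using dp by (simp add: less_imp_le)
    then show ?thesis unfolding chain_def normal_density_def by (intro prod.cong) (auto simp: ac_simps)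
  qed
  also have "\<dots> = (\<Prod>i\<in>{0..<n}. 1 / sqrt (2 * pi * dd \<sigma> \<rho> i)) * exp (\<Sum>i\<in>{0..<n}. - ((lin \<sigma> \<rho> i x)\<^sup>2 / dd \<sigma> \<rho> i) / 2)"
    by (simp only: prod.distrib exp_sum[OF finite_atLeastLessThan])
  also have "(\<Prod>i\<in>{0..<n}. 1 / sqrt (2 * pi * dd \<sigma> \<rho> i)) = 1 / sqrt ((2 * pi) ^ n * (\<Prod>i\<in>{0..<n}. dd \<sigma> \<rho> i))"
  proof -
    have e: "(2 * pi) ^ n * (\<Prod>i\<in>{0..<n}. dd \<sigma> \<rho> i) = (\<Prod>i\<in>{0..<n}. 2 * pi * dd \<sigma> \<rho> i)"
      by (simp add: prod.distrib)
    show ?thesis unfolding e sqrt_prod by (simp add: prod_dividef)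
  qed
  finally have c: "chain \<sigma> \<rho> n (\<lambda>_. 0) x = 1 / sqrt ((2 * pi) ^ n * (\<Prod>i\<in>{0..<n}. dd \<sigma> \<rho> i))
     * exp (\<Sum>i\<in>{0..<n}. - ((lin \<sigma> \<rho> i x)\<^sup>2 / dd \<sigma> \<rho> i) / 2)" .
  have q: "vec n x \<bullet> (the (mat_inverse (markov_cov n \<sigma> \<rho>)) *\<^sub>v vec n x)
           = (\<Sum>i\<in>{0..<n}. (lin \<sigma> \<rho> i x)\<^sup>2 / dd \<sigma> \<rho> i)"
    by (rule markov_facts(2)[OF sp rb])
  have d: "det (markov_cov n \<sigma> \<rho>) = (\<Prod>i\<in>{0..<n}. dd \<sigma> \<rho> i)"
    by (rule markov_facts(1)[OF sp rb])
  have s: "(\<Sum>i\<in>{0..<n}. - ((lin \<sigma> \<rho> i x)\<^sup>2 / dd \<sigma> \<rho> i) / 2) = - (\<Sum>i\<in>{0..<n}. (lin \<sigma> \<rho> i x)\<^sup>2 / dd \<sigma> \<rho> i) / 2"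
    by (simp add: sum_divide_distrib sum_negf)
  show ?thesis unfolding gauss_dens_def q d c s by simp
qed

lemma nd_nn1:
  assumes "s > 0" shows "(\<integral>\<^sup>+y. ennreal (normal_density c s y) \<partial>lborel) = 1"
  using assms by (subst nn_integral_eq_integral) auto

lemma nd_nn2:
  assumes "s > 0" shows "(\<integral>\<^sup>+y. ennreal (normal_density c s y * (y - c)\<^sup>2) \<partial>lborel) = ennreal (s\<^sup>2)"
proof -
  have "(\<integral>\<^sup>+y. ennreal (normal_density c s y * (y - c)\<^sup>2) \<partial>lborel)
     = ennreal (\<integral>y. normal_density c s y * (y - c)^(2*1) \<partial>lborel)"
    using assms integrable_normal_moment[OF assms, of c 2] by (subst nn_integral_eq_integral) auto
  also have "\<dots> = ennreal (s\<^sup>2)"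
    using assms by (subst integral_normal_moment_even) (auto simp: power2_eq_square)
  finally show ?thesis .
qed

lemma comp_meas: "j < k \<Longrightarrow> (\<lambda>x. x j) \<in> borel_measurable (PiM {..<k} (\<lambda>_. lborel :: real measure))"
  using measurable_component_singleton[of j "{..<k}" "\<lambda>_. lborel :: real measure"] by simp

lemma lin_meas:
  assumes "i < k"
  shows "(\<lambda>x. lin \<sigma> \<rho> i (\<lambda>j. x j - m j)) \<in> borel_measurable (PiM {..<k} (\<lambda>_. lborel))"
proof (cases "i = 0")
  case True
  then show ?thesis unfolding lin_def using comp_meas[of 0 k] assms by simp
next
  case False
  then show ?thesis unfolding lin_def using comp_meas[of i k] comp_meas[of "i-1" k] assms by simp
qed

lemma chain_meas:
  "chain \<sigma> \<rho> k m \<in> borel_measurable (PiM {..<k} (\<lambda>_. lborel))"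
  unfolding chain_def
  by (intro borel_measurable_prod measurable_compose[OF lin_meas borel_measurable_normal_density]) auto

lemma chain_nonneg: "chain \<sigma> \<rho> k m x \<ge> 0"
  unfolding chain_def by (intro prod_nonneg) auto

lemma lin_upd: "i < k \<Longrightarrow> lin \<sigma> \<rho> i (\<lambda>j. (x(k := y)) j - m j) = lin \<sigma> \<rho> i (\<lambda>j. x j - m j)"
  unfolding lin_def by auto

lemma lin_k: "lin \<sigma> \<rho> k (\<lambda>j. (x(k := y)) j - m j) =
   y - (if k = 0 then m 0 else m k + aa \<sigma> \<rho> (k-1) * (x (k-1) - m (k-1)))"
  unfolding lin_def by auto

lemma chain_step:
  "chain \<sigma> \<rho> (Suc k) m (x(k := y)) = chain \<sigma> \<rho> k m x *
     normal_density (if k = 0 then m 0 else m k + aa \<sigma> \<rho> (k-1) * (x (k-1) - m (k-1))) (sqrt (dd \<sigma> \<rho> k)) y"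
proof -
  have split: "chain \<sigma> \<rho> (Suc k) m z = chain \<sigma> \<rho> k m z *
     normal_density 0 (sqrt (dd \<sigma> \<rho> k)) (lin \<sigma> \<rho> k (\<lambda>j. z j - m j))" for z
    by (simp add: chain_def)
  have e: "chain \<sigma> \<rho> k m (x(k := y)) = chain \<sigma> \<rho> k m x"
    unfolding chain_def using lin_upd by (intro prod.cong) auto
  show ?thesis unfolding split e lin_k by (simp add: normal_density_def)
qed

lemma chain_nn:
  fixes \<sigma> \<rho> m :: "nat \<Rightarrow> real"
  assumes "\<And>i. i < k \<Longrightarrow> dd \<sigma> \<rho> i > 0"
  shows "(\<integral>\<^sup>+x. ennreal (chain \<sigma> \<rho> k m x) \<partial>PiM {..<k} (\<lambda>_. lborel)) = 1 \<and>
     (\<forall>i<k. (\<integral>\<^sup>+x. ennreal (chain \<sigma> \<rho> k m x * (lin \<sigma> \<rho> i (\<lambda>j. x j - m j))\<^sup>2) \<partial>PiM {..<k} (\<lambda>_. lborel))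
        = ennreal (dd \<sigma> \<rho> i))"
  using assms
proof (induction k)
  case 0
  show ?case by (simp add: PiM_empty chain_def)
next
  case (Suc k)
  interpret P: product_sigma_finite "\<lambda>_::nat. lborel :: real measure"
    by (simp add: product_sigma_finite_def lborel.sigma_finite_measure_axioms)
  have IH: "(\<integral>\<^sup>+x. ennreal (chain \<sigma> \<rho> k m x) \<partial>PiM {..<k} (\<lambda>_. lborel)) = 1"
     "\<And>i. i < k \<Longrightarrow> (\<integral>\<^sup>+x. ennreal (chain \<sigma> \<rho> k m x * (lin \<sigma> \<rho> i (\<lambda>j. x j - m j))\<^sup>2) \<partial>PiM {..<k} (\<lambda>_. lborel))
        = ennreal (dd \<sigma> \<rho> i)"
    using Suc by auto
  define c where "c x = (if k = 0 then m 0 else m k + aa \<sigma> \<rho> (k-1) * (x (k-1) - m (k-1)))" for x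
  define s where "s = sqrt (dd \<sigma> \<rho> k)"
  have s0: "s > 0" using Suc.prems[of k] by (simp add: s_def)
  have s2: "s\<^sup>2 = dd \<sigma> \<rho> k" using Suc.prems[of k] by (simp add: s_def)
  have ins: "{..<Suc k} = insert k {..<k}" by auto
  have step: "chain \<sigma> \<rho> (Suc k) m (x(k := y)) = chain \<sigma> \<rho> k m x * normal_density (c x) s y" for x y
    unfolding chain_step c_def s_def ..
  have lk: "lin \<sigma> \<rho> k (\<lambda>j. (x(k := y)) j - m j) = y - c x" for x y
    unfolding lin_k c_def ..
  have meas: "(\<lambda>x. ennreal (g x)) \<in> borel_measurable (PiM (insert k {..<k}) (\<lambda>_. lborel))"
    if "g \<in> borel_measurable (PiM {..<Suc k} (\<lambda>_. lborel))" for g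
    using measurable_compose[OF that measurable_ennreal] unfolding ins by simp
  have A: "(\<integral>\<^sup>+x. ennreal (chain \<sigma> \<rho> (Suc k) m x) \<partial>PiM {..<Suc k} (\<lambda>_. lborel)) = 1"
  proof -
    have "(\<integral>\<^sup>+x. ennreal (chain \<sigma> \<rho> (Suc k) m x) \<partial>PiM {..<Suc k} (\<lambda>_. lborel))
       = (\<integral>\<^sup>+x. (\<integral>\<^sup>+y. ennreal (chain \<sigma> \<rho> (Suc k) m (x(k := y))) \<partial>lborel) \<partial>PiM {..<k} (\<lambda>_. lborel))"
      unfolding ins by (rule P.product_nn_integral_insert) (auto intro: meas chain_meas)
    also have "\<dots> = (\<integral>\<^sup>+x. ennreal (chain \<sigma> \<rho> k m x) \<partial>PiM {..<k} (\<lambda>_. lborel))"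
    proof (rule nn_integral_cong)
      fix x
      have "(\<integral>\<^sup>+y. ennreal (chain \<sigma> \<rho> (Suc k) m (x(k := y))) \<partial>lborel)
          = (\<integral>\<^sup>+y. ennreal (chain \<sigma> \<rho> k m x) * ennreal (normal_density (c x) s y) \<partial>lborel)"
        unfolding step by (intro nn_integral_cong) (simp add: ennreal_mult chain_nonneg)
      also have "\<dots> = ennreal (chain \<sigma> \<rho> k m x)"
        by (subst nn_integral_cmult) (auto simp: nd_nn1[OF s0])
      finally show "(\<integral>\<^sup>+y. ennreal (chain \<sigma> \<rho> (Suc k) m (x(k := y))) \<partial>lborel) = ennreal (chain \<sigma> \<rho> k m x)" .
    qed
    also have "\<dots> = 1" by (rule IH(1))
    finally show ?thesis .
  qed
  have B: "(\<integral>\<^sup>+x. ennreal (chain \<sigma> \<rho> (Suc k) m x * (lin \<sigma> \<rho> i (\<lambda>j. x j - m j))\<^sup>2) \<partial>PiM {..<Suc k} (\<lambda>_. lborel))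
        = ennreal (dd \<sigma> \<rho> i)" if i: "i < Suc k" for i
  proof -
    have "(\<integral>\<^sup>+x. ennreal (chain \<sigma> \<rho> (Suc k) m x * (lin \<sigma> \<rho> i (\<lambda>j. x j - m j))\<^sup>2) \<partial>PiM {..<Suc k} (\<lambda>_. lborel))
       = (\<integral>\<^sup>+x. (\<integral>\<^sup>+y. ennreal (chain \<sigma> \<rho> (Suc k) m (x(k := y)) * (lin \<sigma> \<rho> i (\<lambda>j. (x(k := y)) j - m j))\<^sup>2) \<partial>lborel) \<partial>PiM {..<k} (\<lambda>_. lborel))"
      unfolding ins by (rule P.product_nn_integral_insert) (auto intro!: meas borel_measurable_times chain_meas borel_measurable_power lin_meas i)
    also have "\<dots> = ennreal (dd \<sigma> \<rho> i)"
    proof (cases "i < k")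
      case True
      have "(\<integral>\<^sup>+x. (\<integral>\<^sup>+y. ennreal (chain \<sigma> \<rho> (Suc k) m (x(k := y)) * (lin \<sigma> \<rho> i (\<lambda>j. (x(k := y)) j - m j))\<^sup>2) \<partial>lborel) \<partial>PiM {..<k} (\<lambda>_. lborel))
         = (\<integral>\<^sup>+x. ennreal (chain \<sigma> \<rho> k m x * (lin \<sigma> \<rho> i (\<lambda>j. x j - m j))\<^sup>2) \<partial>PiM {..<k} (\<lambda>_. lborel))"
      proof (rule nn_integral_cong)
        fix x
        have "(\<integral>\<^sup>+y. ennreal (chain \<sigma> \<rho> (Suc k) m (x(k := y)) * (lin \<sigma> \<rho> i (\<lambda>j. (x(k := y)) j - m j))\<^sup>2) \<partial>lborel)
            = (\<integral>\<^sup>+y. ennreal (chain \<sigma> \<rho> k m x * (lin \<sigma> \<rho> i (\<lambda>j. x j - m j))\<^sup>2) * ennreal (normal_density (c x) s y) \<partial>lborel)"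
          unfolding step lin_upd[OF True] by (intro nn_integral_cong) (simp add: ennreal_mult[symmetric] chain_nonneg ac_simps)
        also have "\<dots> = ennreal (chain \<sigma> \<rho> k m x * (lin \<sigma> \<rho> i (\<lambda>j. x j - m j))\<^sup>2)"
          by (subst nn_integral_cmult) (auto simp: nd_nn1[OF s0])
        finally show "(\<integral>\<^sup>+y. ennreal (chain \<sigma> \<rho> (Suc k) m (x(k := y)) * (lin \<sigma> \<rho> i (\<lambda>j. (x(k := y)) j - m j))\<^sup>2) \<partial>lborel)
            = ennreal (chain \<sigma> \<rho> k m x * (lin \<sigma> \<rho> i (\<lambda>j. x j - m j))\<^sup>2)" .
      qed
      then show ?thesis using IH(2)[OF True] by simp
    next
      case False
      then have ik: "i = k" using i by simp
      have "(\<integral>\<^sup>+x. (\<integral>\<^sup>+y. ennreal (chain \<sigma> \<rho> (Suc k) m (x(k := y)) * (lin \<sigma> \<rho> i (\<lambda>j. (x(k := y)) j - m j))\<^sup>2) \<partial>lborel) \<partial>PiM {..<k} (\<lambda>_. lborel))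
         = (\<integral>\<^sup>+x. ennreal (chain \<sigma> \<rho> k m x) * ennreal (dd \<sigma> \<rho> k) \<partial>PiM {..<k} (\<lambda>_. lborel))"
      proof (rule nn_integral_cong)
        fix x
        have "(\<integral>\<^sup>+y. ennreal (chain \<sigma> \<rho> (Suc k) m (x(k := y)) * (lin \<sigma> \<rho> i (\<lambda>j. (x(k := y)) j - m j))\<^sup>2) \<partial>lborel)
            = (\<integral>\<^sup>+y. ennreal (chain \<sigma> \<rho> k m x) * ennreal (normal_density (c x) s y * (y - c x)\<^sup>2) \<partial>lborel)"
          unfolding step ik lk by (intro nn_integral_cong) (simp add: ennreal_mult[symmetric] chain_nonneg ac_simps)
        also have "\<dots> = ennreal (chain \<sigma> \<rho> k m x) * ennreal (dd \<sigma> \<rho> k)"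
          by (subst nn_integral_cmult) (auto simp: nd_nn2[OF s0] s2)
        finally show "(\<integral>\<^sup>+y. ennreal (chain \<sigma> \<rho> (Suc k) m (x(k := y)) * (lin \<sigma> \<rho> i (\<lambda>j. (x(k := y)) j - m j))\<^sup>2) \<partial>lborel)
            = ennreal (chain \<sigma> \<rho> k m x) * ennreal (dd \<sigma> \<rho> k)" .
      qed
      also have "\<dots> = ennreal (dd \<sigma> \<rho> k)"
        by (subst nn_integral_multc) (auto intro: measurable_compose[OF chain_meas measurable_ennreal] simp: IH(1))
      finally show ?thesis using ik by simp
    qed
    finally show ?thesis .
  qed
  show ?case using A B by auto
qed

lemma gibbs_pt:
  fixes t h :: real
  assumes t: "t \<ge> 0" and h: "h > 0"
  shows "0 \<le> t * ln t - t * ln h - t + h" and "t * ln t - t * ln h - t + h = 0 \<Longrightarrow> t = h"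
proof -
  have main: "t * ln t - t * ln h - t + h = t * ((h/t) - 1 - ln (h/t))" if tp: "t > 0"
    using tp h by (simp add: ln_div field_simps)
  show "0 \<le> t * ln t - t * ln h - t + h"
  proof (cases "t = 0")
    case True then show ?thesis using h by simp
  next
    case False
    then have tp: "t > 0" using t by simp
    have "ln (h/t) \<le> h/t - 1" using tp h by (intro ln_le_minus_one) simp
    then show ?thesis unfolding main[OF tp] using tp by simp
  qed
  assume eq: "t * ln t - t * ln h - t + h = 0"
  show "t = h"
  proof (cases "t = 0")
    case True then show ?thesis using h eq by simp
  next
    case False
    then have tp: "t > 0" using t by simp
    then have "ln (h/t) = h/t - 1" using eq unfolding main[OF tp] by simp
    then have "h/t = 1" using tp h by (intro ln_eq_minus_one) auto
    then show ?thesis using tp by simp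
  qed
qed

lemma gibbs:
  fixes F H :: "'a \<Rightarrow> real"
  assumes F: "F \<in> borel_measurable M" "AE x in M. F x \<ge> 0" "integrable M F" "(\<integral>x. F x \<partial>M) = 1"
    "integrable M (\<lambda>x. F x * ln (F x))"
   and H: "H \<in> borel_measurable M" "\<And>x. H x > 0" "integrable M H" "(\<integral>x. H x \<partial>M) = 1"
    "integrable M (\<lambda>x. F x * ln (H x))"
  shows "(\<integral>x. F x * ln (H x) \<partial>M) \<le> (\<integral>x. F x * ln (F x) \<partial>M)"
    and "(\<integral>x. F x * ln (H x) \<partial>M) = (\<integral>x. F x * ln (F x) \<partial>M) \<Longrightarrow> AE x in M. F x = H x"
proof -
  define \<psi> where "\<psi> x = F x * ln (F x) - F x * ln (H x) - F x + H x" for x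
  have int\<psi>: "integrable M \<psi>" unfolding \<psi>_def using F H by auto
  have nn: "AE x in M. 0 \<le> \<psi> x" using F(2) by eventually_elim (auto simp: \<psi>_def intro: gibbs_pt H(2))
  have I: "(\<integral>x. \<psi> x \<partial>M) = (\<integral>x. F x * ln (F x) \<partial>M) - (\<integral>x. F x * ln (H x) \<partial>M)"
    unfolding \<psi>_def using F H by simp
  show "(\<integral>x. F x * ln (H x) \<partial>M) \<le> (\<integral>x. F x * ln (F x) \<partial>M)"
    using integral_nonneg_AE[OF nn] I by simp
  assume "(\<integral>x. F x * ln (H x) \<partial>M) = (\<integral>x. F x * ln (F x) \<partial>M)"
  then have "(\<integral>x. \<psi> x \<partial>M) = 0" using I by simp
  then have "AE x in M. \<psi> x = 0" using integral_nonneg_eq_0_iff_AE[OF int\<psi> nn] by simp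
  then show "AE x in M. F x = H x" using F(2)
    by eventually_elim (auto simp: \<psi>_def intro: gibbs_pt(2)[OF _ H(2)])
qed

lemma ln_nd:
  assumes "d > 0"
  shows "ln (normal_density 0 (sqrt d) t) = - ln (sqrt (2 * pi * d)) - t\<^sup>2 / (2 * d)"
  using assms by (simp add: normal_density_def ln_mult ln_div less_imp_le)

lemma ln_chain:
  assumes dp: "\<And>i. i < k \<Longrightarrow> dd \<sigma> \<rho> i > 0"
  shows "ln (chain \<sigma> \<rho> k m x) = (\<Sum>i\<in>{0..<k}. - ln (sqrt (2 * pi * dd \<sigma> \<rho> i))
            - (lin \<sigma> \<rho> i (\<lambda>j. x j - m j))\<^sup>2 / (2 * dd \<sigma> \<rho> i))"
proof -
  have "ln (chain \<sigma> \<rho> k m x) = (\<Sum>i\<in>{0..<k}. ln (normal_density 0 (sqrt (dd \<sigma> \<rho> i)) (lin \<sigma> \<rho> i (\<lambda>j. x j - m j))))"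
  proof -
    have pos: "\<And>i t. i < k \<Longrightarrow> normal_density 0 (sqrt (dd \<sigma> \<rho> i)) t > 0"
      using dp by (intro normal_density_pos) simp
    show ?thesis unfolding chain_def by (subst ln_prod) (auto, metis less_irrefl pos)
  qed
  also have "\<dots> = (\<Sum>i\<in>{0..<k}. - ln (sqrt (2 * pi * dd \<sigma> \<rho> i))
            - (lin \<sigma> \<rho> i (\<lambda>j. x j - m j))\<^sup>2 / (2 * dd \<sigma> \<rho> i))"
    using dp by (intro sum.cong) (auto simp: ln_nd)
  finally show ?thesis .
qed

lemma chain_pos:
  assumes dp: "\<And>i. i < k \<Longrightarrow> dd \<sigma> \<rho> i > 0"
  shows "chain \<sigma> \<rho> k m x > 0"
  unfolding chain_def using dp by (intro prod_pos) (auto intro!: normal_density_pos)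

lemma cross_ent:
  fixes F :: "(nat\<Rightarrow>real) \<Rightarrow> real" and m :: "nat \<Rightarrow> real"
  assumes dp: "\<And>i. i < n \<Longrightarrow> dd \<sigma> \<rho> i > 0"
    and Fi: "integrable (Rn n) F" and F1: "(\<integral>x. F x \<partial>Rn n) = 1"
    and li: "\<And>i. i < n \<Longrightarrow> integrable (Rn n) (\<lambda>x. F x * (lin \<sigma> \<rho> i (\<lambda>j. x j - m j))\<^sup>2)"
    and lv: "\<And>i. i < n \<Longrightarrow> (\<integral>x. F x * (lin \<sigma> \<rho> i (\<lambda>j. x j - m j))\<^sup>2 \<partial>Rn n) = dd \<sigma> \<rho> i"
  shows "integrable (Rn n) (\<lambda>x. F x * ln (chain \<sigma> \<rho> n m x))"
    and "- (\<integral>x. F x * ln (chain \<sigma> \<rho> n m x) \<partial>Rn n) = (\<Sum>i\<in>{0..<n}. 1/2 + ln (sqrt (2 * pi * dd \<sigma> \<rho> i)))"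
proof -
  have e: "F x * ln (chain \<sigma> \<rho> n m x) = (\<Sum>i\<in>{0..<n}. (- ln (sqrt (2 * pi * dd \<sigma> \<rho> i))) * F x
            - (1 / (2 * dd \<sigma> \<rho> i)) * (F x * (lin \<sigma> \<rho> i (\<lambda>j. x j - m j))\<^sup>2))" for x
  proof -
    have l: "ln (chain \<sigma> \<rho> n m x) = (\<Sum>i\<in>{0..<n}. - ln (sqrt (2 * pi * dd \<sigma> \<rho> i))
            - (lin \<sigma> \<rho> i (\<lambda>j. x j - m j))\<^sup>2 / (2 * dd \<sigma> \<rho> i))"
      by (rule ln_chain) (rule dp)
    show ?thesis unfolding l sum_distrib_left by (intro sum.cong) (auto simp: algebra_simps)
  qed
  show "integrable (Rn n) (\<lambda>x. F x * ln (chain \<sigma> \<rho> n m x))"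
    unfolding e using Fi li by (intro Bochner_Integration.integrable_sum) auto
  have "(\<integral>x. F x * ln (chain \<sigma> \<rho> n m x) \<partial>Rn n) = (\<Sum>i\<in>{0..<n}. (- ln (sqrt (2 * pi * dd \<sigma> \<rho> i))) * 1
            - (1 / (2 * dd \<sigma> \<rho> i)) * dd \<sigma> \<rho> i)"
    unfolding e using Fi li lv F1 by (subst Bochner_Integration.integral_sum) (auto intro!: sum.cong)
  also have "\<dots> = - (\<Sum>i\<in>{0..<n}. 1/2 + ln (sqrt (2 * pi * dd \<sigma> \<rho> i)))"
    using dp by (simp add: sum_negf[symmetric]) (auto intro!: sum.cong simp: dp[THEN less_imp_neq, THEN not_sym])
  finally show "- (\<integral>x. F x * ln (chain \<sigma> \<rho> n m x) \<partial>Rn n) = (\<Sum>i\<in>{0..<n}. 1/2 + ln (sqrt (2 * pi * dd \<sigma> \<rho> i)))"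
    by simp
qed

lemma nn_to_int:
  fixes h :: "'a \<Rightarrow> real"
  assumes "h \<in> borel_measurable M" "\<And>x. h x \<ge> 0" "(\<integral>\<^sup>+x. ennreal (h x) \<partial>M) = ennreal c" "c \<ge> 0"
  shows "integrable M h" "(\<integral>x. h x \<partial>M) = c"
proof -
  show i: "integrable M h" using assms by (intro integrableI_nonneg) auto
  have "ennreal (\<integral>x. h x \<partial>M) = ennreal c"
    using nn_integral_eq_integral[OF i] assms by simp
  then show "(\<integral>x. h x \<partial>M) = c" using assms integral_nonneg_AE[of h M] by simp
qed

lemma chain_int:
  fixes \<sigma> \<rho> m :: "nat \<Rightarrow> real"
  assumes dp: "\<And>i. i < n \<Longrightarrow> dd \<sigma> \<rho> i > 0"
  shows "integrable (Rn n) (chain \<sigma> \<rho> n m)" "(\<integral>x. chain \<sigma> \<rho> n m x \<partial>Rn n) = 1"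
    and "\<And>i. i < n \<Longrightarrow> integrable (Rn n) (\<lambda>x. chain \<sigma> \<rho> n m x * (lin \<sigma> \<rho> i (\<lambda>j. x j - m j))\<^sup>2)"
    and "\<And>i. i < n \<Longrightarrow> (\<integral>x. chain \<sigma> \<rho> n m x * (lin \<sigma> \<rho> i (\<lambda>j. x j - m j))\<^sup>2 \<partial>Rn n) = dd \<sigma> \<rho> i"
proof -
  note nn = chain_nn[OF dp, where m=m]
  show "integrable (Rn n) (chain \<sigma> \<rho> n m)" "(\<integral>x. chain \<sigma> \<rho> n m x \<partial>Rn n) = 1"
    using nn_to_int[of "chain \<sigma> \<rho> n m" "Rn n" 1] nn chain_meas chain_nonneg by auto
  fix i assume i: "i < n"
  have me: "(\<lambda>x. chain \<sigma> \<rho> n m x * (lin \<sigma> \<rho> i (\<lambda>j. x j - m j))\<^sup>2) \<in> borel_measurable (Rn n)"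
    using chain_meas lin_meas[OF i] by measurable
  show "integrable (Rn n) (\<lambda>x. chain \<sigma> \<rho> n m x * (lin \<sigma> \<rho> i (\<lambda>j. x j - m j))\<^sup>2)"
       "(\<integral>x. chain \<sigma> \<rho> n m x * (lin \<sigma> \<rho> i (\<lambda>j. x j - m j))\<^sup>2 \<partial>Rn n) = dd \<sigma> \<rho> i"
    using nn_to_int[OF me, of "dd \<sigma> \<rho> i"] nn i dp[OF i] chain_nonneg by auto
qed

lemma abs_le_sq1: "\<bar>t::real\<bar> \<le> t\<^sup>2 + 1"
proof -
  have "0 \<le> (\<bar>t\<bar> - 1)\<^sup>2" by simp
  then have "2 * \<bar>t\<bar> \<le> t\<^sup>2 + 1" by (simp add: power2_eq_square algebra_simps)
  then show ?thesis by simp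
qed

lemma abs_prod_le: "\<bar>u * v\<bar> \<le> u\<^sup>2 + (v::real)\<^sup>2"
proof -
  have "0 \<le> (\<bar>u\<bar> - \<bar>v\<bar>)\<^sup>2" by simp
  then have "2 * (\<bar>u\<bar> * \<bar>v\<bar>) \<le> u\<^sup>2 + v\<^sup>2"
    by (simp add: power2_eq_square algebra_simps abs_mult_self_eq)
  moreover have "0 \<le> \<bar>u\<bar> * \<bar>v\<bar>" by simp
  moreover have "\<bar>u * v\<bar> = \<bar>u\<bar> * \<bar>v\<bar>" by (rule abs_mult)
  ultimately show ?thesis by linarith
qed

lemma f_moments:
  fixes f :: "(nat \<Rightarrow> real) \<Rightarrow> real"
  assumes f_meas: "f \<in> borel_measurable (Rn n)"
    and f_nonneg: "AE x in Rn n. f x \<ge> 0"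
    and f_int: "integrable (Rn n) f"
    and sm: "\<And>i. i < n \<Longrightarrow> integrable (Rn n) (\<lambda>x. (x i)\<^sup>2 * f x)"
    and i: "i < n" and j: "j < n"
  shows "integrable (Rn n) (\<lambda>x. (x i - a) * (x j - b) * f x)"
proof -
  have x1: "integrable (Rn n) (\<lambda>x. x k * f x)" if k: "k < n" for k
  proof (rule Bochner_Integration.integrable_bound)
    show "integrable (Rn n) (\<lambda>x. (x k)\<^sup>2 * f x + f x)" using sm[OF k] f_int by auto
    show "(\<lambda>x. x k * f x) \<in> borel_measurable (Rn n)" using comp_meas[OF k] f_meas by measurable
    show "AE x in Rn n. norm (x k * f x) \<le> norm ((x k)\<^sup>2 * f x + f x)"
      using f_nonneg
    proof eventually_elim
      case (elim x)
      have "\<bar>x k\<bar> \<le> (x k)\<^sup>2 + 1"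
        by (rule abs_le_sq1)
      then have "\<bar>x k\<bar> * f x \<le> ((x k)\<^sup>2 + 1) * f x" using elim by (intro mult_right_mono) auto
      then show ?case using elim by (simp add: abs_mult algebra_simps)
    qed
  qed
  have x2: "integrable (Rn n) (\<lambda>x. (x k - c)\<^sup>2 * f x)" if k: "k < n" for k c
  proof -
    have "(\<lambda>x. (x k - c)\<^sup>2 * f x) = (\<lambda>x. (x k)\<^sup>2 * f x - 2 * c * (x k * f x) + c\<^sup>2 * f x)"
      by (rule ext) (simp add: power2_eq_square algebra_simps)
    then show ?thesis using sm[OF k] x1[OF k] f_int by auto
  qed
  show ?thesis
  proof (rule Bochner_Integration.integrable_bound)
    show "integrable (Rn n) (\<lambda>x. (x i - a)\<^sup>2 * f x + (x j - b)\<^sup>2 * f x)" using x2[OF i] x2[OF j] by auto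
    show "(\<lambda>x. (x i - a) * (x j - b) * f x) \<in> borel_measurable (Rn n)"
      using comp_meas[OF i] comp_meas[OF j] f_meas by measurable
    show "AE x in Rn n. norm ((x i - a) * (x j - b) * f x) \<le> norm ((x i - a)\<^sup>2 * f x + (x j - b)\<^sup>2 * f x)"
      using f_nonneg
    proof eventually_elim
      case (elim x)
      have "\<bar>(x i - a) * (x j - b)\<bar> \<le> (x i - a)\<^sup>2 + (x j - b)\<^sup>2"
        by (rule abs_prod_le)
      then have "\<bar>(x i - a) * (x j - b)\<bar> * f x \<le> ((x i - a)\<^sup>2 + (x j - b)\<^sup>2) * f x"
        using elim by (intro mult_right_mono) auto
      moreover have "norm ((x i - a) * (x j - b) * f x) = \<bar>(x i - a) * (x j - b)\<bar> * f x"
        using elim by (simp add: abs_mult)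
      moreover have "((x i - a)\<^sup>2 + (x j - b)\<^sup>2) * f x \<le> norm ((x i - a)\<^sup>2 * f x + (x j - b)\<^sup>2 * f x)"
        by (simp add: distrib_right)
      ultimately show ?case by linarith
    qed
  qed
qed

lemma f_lin:
  fixes f :: "(nat \<Rightarrow> real) \<Rightarrow> real" and \<sigma> \<rho> :: "nat \<Rightarrow> real"
  assumes f_meas: "f \<in> borel_measurable (Rn n)"
    and f_nonneg: "AE x in Rn n. f x \<ge> 0"
    and f_int: "integrable (Rn n) f"
    and sm: "\<And>i. i < n \<Longrightarrow> integrable (Rn n) (\<lambda>x. (x i)\<^sup>2 * f x)"
    and sp: "\<And>i. i < n \<Longrightarrow> \<sigma> i > 0"
    and var: "\<And>i. i < n \<Longrightarrow> var_d n f i = (\<sigma> i)\<^sup>2"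
    and corr: "\<And>i. i < n - 1 \<Longrightarrow> corr_d n f i (Suc i) = \<rho> i"
    and i: "i < n"
  shows "integrable (Rn n) (\<lambda>x. f x * (lin \<sigma> \<rho> i (\<lambda>j. x j - mean_d n f j))\<^sup>2)"
    and "(\<integral>x. f x * (lin \<sigma> \<rho> i (\<lambda>j. x j - mean_d n f j))\<^sup>2 \<partial>Rn n) = dd \<sigma> \<rho> i"
proof -
  define U where "U k x = x k - mean_d n f k" for k x
  have intU: "integrable (Rn n) (\<lambda>x. U k x * U l x * f x)" if "k < n" "l < n" for k l
    unfolding U_def by (rule f_moments[OF f_meas f_nonneg f_int]) (use sm that in auto)
  have cov: "(\<integral>x. U k x * U l x * f x \<partial>Rn n) = cov_d n f k l" for k l
    unfolding U_def cov_d_def ..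
  have "integrable (Rn n) (\<lambda>x. f x * (lin \<sigma> \<rho> i (\<lambda>j. x j - mean_d n f j))\<^sup>2) \<and>
     (\<integral>x. f x * (lin \<sigma> \<rho> i (\<lambda>j. x j - mean_d n f j))\<^sup>2 \<partial>Rn n) = dd \<sigma> \<rho> i"
  proof (cases i)
    case 0
    have e: "(\<lambda>x. f x * (lin \<sigma> \<rho> i (\<lambda>j. x j - mean_d n f j))\<^sup>2) = (\<lambda>x. U 0 x * U 0 x * f x)"
      using 0 by (auto simp: lin_def U_def power2_eq_square)
    show ?thesis unfolding e using intU[of 0 0] i 0 cov[of 0 0] var[of 0]
      by (simp add: var_d_def dd_def)
  next
    case (Suc p)
    define A where "A = aa \<sigma> \<rho> p"
    have p: "p < n" "Suc p < n" "p < n - 1" using i Suc by auto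
    have e: "(\<lambda>x. f x * (lin \<sigma> \<rho> i (\<lambda>j. x j - mean_d n f j))\<^sup>2) =
       (\<lambda>x. U i x * U i x * f x - 2 * A * (U p x * U i x * f x) + A\<^sup>2 * (U p x * U p x * f x))"
      using Suc by (auto simp: lin_def U_def A_def power2_eq_square algebra_simps)
    have I: "integrable (Rn n) (\<lambda>x. U i x * U i x * f x - 2 * A * (U p x * U i x * f x) + A\<^sup>2 * (U p x * U p x * f x))"
      using intU[of i i] intU[of p i] intU[of p p] p i by auto
    have "(\<integral>x. U i x * U i x * f x - 2 * A * (U p x * U i x * f x) + A\<^sup>2 * (U p x * U p x * f x) \<partial>Rn n)
       = cov_d n f i i - 2 * A * cov_d n f p i + A\<^sup>2 * cov_d n f p p"
      using intU[of i i] intU[of p i] intU[of p p] p i by (simp add: cov)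
    also have "\<dots> = dd \<sigma> \<rho> i"
    proof -
      have vi: "cov_d n f i i = (\<sigma> i)\<^sup>2" "cov_d n f p p = (\<sigma> p)\<^sup>2"
        using var[OF i] var[OF p(1)] by (auto simp: var_d_def)
      have sq: "sqrt ((\<sigma> p)\<^sup>2 * (\<sigma> i)\<^sup>2) = \<sigma> p * \<sigma> i"
        using sp[OF i] sp[OF p(1)] by (simp add: real_sqrt_mult)
      have "corr_d n f p i = \<rho> p" using corr[OF p(3)] Suc by simp
      then have "cov_d n f p i / (\<sigma> p * \<sigma> i) = \<rho> p"
        unfolding corr_d_def var_d_def using vi Suc sq by (simp add: var_d_def)
      then have cv: "cov_d n f p i = \<rho> p * \<sigma> p * \<sigma> i"
        using sp[OF i] sp[OF p(1)] by (simp add: field_simps)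
      show ?thesis unfolding vi cv A_def aa_def dd_def using Suc sp[OF p(1)]
        by (simp add: field_simps power2_eq_square)
    qed
    finally show ?thesis unfolding e using I by simp
  qed
  then show "integrable (Rn n) (\<lambda>x. f x * (lin \<sigma> \<rho> i (\<lambda>j. x j - mean_d n f j))\<^sup>2)"
    and "(\<integral>x. f x * (lin \<sigma> \<rho> i (\<lambda>j. x j - mean_d n f j))\<^sup>2 \<partial>Rn n) = dd \<sigma> \<rho> i" by auto
qed

theorem theorem2:
  fixes n :: nat and \<sigma> \<rho> :: "nat \<Rightarrow> real" and f :: "(nat \<Rightarrow> real) \<Rightarrow> real"
  defines "g \<equiv> gauss_dens n (markov_cov n \<sigma> \<rho>)"
  assumes n: "n \<ge> 2"
    and sigma_pos: "\<And>i. i < n \<Longrightarrow> \<sigma> i > 0"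
    and rho_bounds: "\<And>i. i < n - 1 \<Longrightarrow> \<rho> i \<in> {-1<..<1}"
    and f_meas: "f \<in> borel_measurable (Rn n)"
    and f_nonneg: "AE x in Rn n. f x \<ge> 0"
    and f_int: "integrable (Rn n) f"
    and f_total: "(\<integral>x. f x \<partial>Rn n) = 1"
    and second_moments: "\<And>i. i < n \<Longrightarrow> integrable (Rn n) (\<lambda>x. (x i)\<^sup>2 * f x)"
    and flnf_int: "integrable (Rn n) (\<lambda>x. f x * ln (f x))"
    and var: "\<And>i. i < n \<Longrightarrow> var_d n f i = (\<sigma> i)\<^sup>2"
    and corr: "\<And>i. i < n - 1 \<Longrightarrow> corr_d n f i (Suc i) = \<rho> i"
  shows "dent n f \<le> dent n g \<and>
         (dent n f = dent n g \<longleftrightarrow> (\<exists>m :: nat \<Rightarrow> real. AE x in Rn n. f x = g (\<lambda>i. x i - m i)))"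
proof -
  have dp: "\<And>i. i < n \<Longrightarrow> dd \<sigma> \<rho> i > 0" using dd_pos[where \<sigma>=\<sigma> and \<rho>=\<rho> and n=n, OF sigma_pos rho_bounds] by blast
  define C where "C = (\<Sum>i\<in>{0..<n}. 1/2 + ln (sqrt (2 * pi * dd \<sigma> \<rho> i)))"
  have g_eq: "g = chain \<sigma> \<rho> n (\<lambda>_. 0)"
    unfolding g_def by (intro ext) (rule gauss_chain[where \<sigma>=\<sigma> and \<rho>=\<rho> and n=n, OF sigma_pos rho_bounds])
  have g_shift: "g (\<lambda>i. x i - m i) = chain \<sigma> \<rho> n m x" for m x
    unfolding g_eq chain_def by simp
  have Hpos: "chain \<sigma> \<rho> n m x > 0" for m x by (rule chain_pos) (rule dp)
  have Hint: "integrable (Rn n) (chain \<sigma> \<rho> n m)" for m by (rule chain_int(1)) (rule dp)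
  have H1: "(\<integral>x. chain \<sigma> \<rho> n m x \<partial>Rn n) = 1" for m by (rule chain_int(2)) (rule dp)
  have Hl: "integrable (Rn n) (\<lambda>x. chain \<sigma> \<rho> n m x * (lin \<sigma> \<rho> i (\<lambda>j. x j - m j))\<^sup>2)" if "i < n" for m i
    by (rule chain_int(3)) (use dp that in auto)
  have Hv: "(\<integral>x. chain \<sigma> \<rho> n m x * (lin \<sigma> \<rho> i (\<lambda>j. x j - m j))\<^sup>2 \<partial>Rn n) = dd \<sigma> \<rho> i" if "i < n" for m i
    by (rule chain_int(4)) (use dp that in auto)
  have selfent: "- (\<integral>x. chain \<sigma> \<rho> n m x * ln (chain \<sigma> \<rho> n m x) \<partial>Rn n) = C" for m
    unfolding C_def by (rule cross_ent(2)) (use dp Hint H1 Hl Hv in auto)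
  have dent_g: "dent n g = C" unfolding dent_def g_eq using selfent[of "\<lambda>_. 0"] by simp
  define mu where "mu = mean_d n f"
  have fl: "integrable (Rn n) (\<lambda>x. f x * (lin \<sigma> \<rho> i (\<lambda>j. x j - mu j))\<^sup>2)"
     "(\<integral>x. f x * (lin \<sigma> \<rho> i (\<lambda>j. x j - mu j))\<^sup>2 \<partial>Rn n) = dd \<sigma> \<rho> i" if i: "i < n" for i
    unfolding mu_def
     by (rule f_lin[OF f_meas f_nonneg f_int], (use second_moments sigma_pos var corr i in auto))+
  have cf1: "integrable (Rn n) (\<lambda>x. f x * ln (chain \<sigma> \<rho> n mu x))"
    by (rule cross_ent(1)) (use dp f_int f_total fl in auto)
  have cfC: "- (\<integral>x. f x * ln (chain \<sigma> \<rho> n mu x) \<partial>Rn n) = C"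
    unfolding C_def by (rule cross_ent(2)) (use dp f_int f_total fl in auto)
  have gb1: "(\<integral>x. f x * ln (chain \<sigma> \<rho> n mu x) \<partial>Rn n) \<le> (\<integral>x. f x * ln (f x) \<partial>Rn n)"
    by (rule gibbs(1)[OF f_meas f_nonneg f_int f_total flnf_int chain_meas Hpos Hint H1 cf1])
  have gb2: "AE x in Rn n. f x = chain \<sigma> \<rho> n mu x"
    if "(\<integral>x. f x * ln (chain \<sigma> \<rho> n mu x) \<partial>Rn n) = (\<integral>x. f x * ln (f x) \<partial>Rn n)"
    by (rule gibbs(2)[OF f_meas f_nonneg f_int f_total flnf_int chain_meas Hpos Hint H1 cf1 that])
  have le: "dent n f \<le> dent n g"
    using gb1 cfC dent_g unfolding dent_def by linarith
  have iff: "dent n f = dent n g \<longleftrightarrow> (\<exists>m :: nat \<Rightarrow> real. AE x in Rn n. f x = g (\<lambda>i. x i - m i))"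
  proof
    assume "dent n f = dent n g"
    then have "(\<integral>x. f x * ln (chain \<sigma> \<rho> n mu x) \<partial>Rn n) = (\<integral>x. f x * ln (f x) \<partial>Rn n)"
      using cfC dent_g unfolding dent_def by linarith
    then have "AE x in Rn n. f x = chain \<sigma> \<rho> n mu x" by (rule gb2)
    then show "\<exists>m :: nat \<Rightarrow> real. AE x in Rn n. f x = g (\<lambda>i. x i - m i)"
      unfolding g_shift by blast
  next
    assume "\<exists>m :: nat \<Rightarrow> real. AE x in Rn n. f x = g (\<lambda>i. x i - m i)"
    then obtain m where m: "AE x in Rn n. f x = chain \<sigma> \<rho> n m x" unfolding g_shift by blast
    have "(\<integral>x. f x * ln (f x) \<partial>Rn n) = (\<integral>x. chain \<sigma> \<rho> n m x * ln (chain \<sigma> \<rho> n m x) \<partial>Rn n)"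
    proof (rule integral_cong_AE)
      show "(\<lambda>x. f x * ln (f x)) \<in> borel_measurable (Rn n)" using f_meas by measurable
      show "(\<lambda>x. chain \<sigma> \<rho> n m x * ln (chain \<sigma> \<rho> n m x)) \<in> borel_measurable (Rn n)"
        using chain_meas by measurable
      show "AE x in Rn n. f x * ln (f x) = chain \<sigma> \<rho> n m x * ln (chain \<sigma> \<rho> n m x)"
        using m by eventually_elim simp
    qed
    then show "dent n f = dent n g" using dent_g selfent[of m] unfolding dent_def by simp
  qed
  show ?thesis using le iff by blast
qed

end
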